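(* For every instance with nonnegative-value players (and any number of teams), there exists an allocation that is both EF1 and Pareto optimal.
   Context: Setting: teams $T=[n]$, players $P=\{p_1,\dots,p_m\}$. Each player $p$ has a complete, transitive weak preference $\succsim_p$ over $T$. Each team $i$ has an additive valuation $v_i:2^P\to\mathbb{R}$, $v_i(S)=\sum_{p\in S}v_i(p)$; nonnegative-value players means $v_i(p)\ge0$ for all $i,p$. An allocation is an ordered partition $(A_1,\dots,A_n)$ of $P$. $A$ is EF1 if for all distinct $i,j$ there are $X\subseteq A_i$, $Y\subseteq A_j$ with $|X\cup Y|\le1$ and $v_i(A_i\setminus X)\ge v_i(A_j\setminus Y)$. A team is better (worse) off in $A'$ than in $A$ if $v_i(A'_i)>v_i(A_i)$ (resp. $<$); a player is better (worse) off if she strictly prefers (strictly disprefers) her team in $A'$ to her team in $A$. $A$ is Pareto dominated by $A'$ if no party (team or player) is worse off and at least one party is better off; $A$ is Pareto optimal (PO) if not Pareto dominated by any allocation. *)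

theory Defs
  imports Complex_Main
begin

text \<open>Player p's weak preference over teams is the relation pref p (pref p s t means
  p weakly prefers s to t).\<close>

definition allocation :: "'t set \<Rightarrow> 'p set \<Rightarrow> ('t \<Rightarrow> 'p set) \<Rightarrow> bool" where
  "allocation T P A \<longleftrightarrow>
     (\<Union>i\<in>T. A i) = P \<and> (\<forall>i\<in>T. \<forall>j\<in>T. i \<noteq> j \<longrightarrow> A i \<inter> A j = {})"

definition val :: "('t \<Rightarrow> 'p \<Rightarrow> real) \<Rightarrow> 't \<Rightarrow> 'p set \<Rightarrow> real" where
  "val v i S = (\<Sum>p\<in>S. v i p)"

definition weak_pref :: "'t set \<Rightarrow> ('t \<Rightarrow> 't \<Rightarrow> bool) \<Rightarrow> bool" where
  "weak_pref T R \<longleftrightarrow> (\<forall>s\<in>T. \<forall>t\<in>T. R s t \<or> R t s)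
      \<and> (\<forall>r\<in>T. \<forall>s\<in>T. \<forall>t\<in>T. R r s \<longrightarrow> R s t \<longrightarrow> R r t)"

definition EF1 :: "'t set \<Rightarrow> ('t \<Rightarrow> 'p \<Rightarrow> real) \<Rightarrow> ('t \<Rightarrow> 'p set) \<Rightarrow> bool" where
  "EF1 T v A \<longleftrightarrow> (\<forall>i\<in>T. \<forall>j\<in>T. i \<noteq> j \<longrightarrow>
     (\<exists>X Y. X \<subseteq> A i \<and> Y \<subseteq> A j \<and> card (X \<union> Y) \<le> 1 \<and>
            val v i (A i - X) \<ge> val v i (A j - Y)))"

definition team_of :: "'t set \<Rightarrow> ('t \<Rightarrow> 'p set) \<Rightarrow> 'p \<Rightarrow> 't" where
  "team_of T A p = (THE i. i \<in> T \<and> p \<in> A i)"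

definition pareto_dominates ::
  "'t set \<Rightarrow> 'p set \<Rightarrow> ('p \<Rightarrow> 't \<Rightarrow> 't \<Rightarrow> bool) \<Rightarrow> ('t \<Rightarrow> 'p \<Rightarrow> real)
     \<Rightarrow> ('t \<Rightarrow> 'p set) \<Rightarrow> ('t \<Rightarrow> 'p set) \<Rightarrow> bool" where
  "pareto_dominates T P pref v A' A \<longleftrightarrow>
     (\<forall>i\<in>T. val v i (A' i) \<ge> val v i (A i)) \<and>
     (\<forall>p\<in>P. pref p (team_of T A' p) (team_of T A p)) \<and>
     ((\<exists>i\<in>T. val v i (A' i) > val v i (A i)) \<or>
      (\<exists>p\<in>P. \<not> pref p (team_of T A p) (team_of T A' p)))"

definition pareto_optimal ::
  "'t set \<Rightarrow> 'p set \<Rightarrow> ('p \<Rightarrow> 't \<Rightarrow> 't \<Rightarrow> bool) \<Rightarrow> ('t \<Rightarrow> 'p \<Rightarrow> real)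
     \<Rightarrow> ('t \<Rightarrow> 'p set) \<Rightarrow> bool" where
  "pareto_optimal T P pref v A \<longleftrightarrow>
     allocation T P A \<and>
     \<not> (\<exists>A'. allocation T P A' \<and> pareto_dominates T P pref v A' A)"

end

theory Submission
  imports Defs "HOL-Library.FuncSet"
begin

definition aof :: "'p set \<Rightarrow> ('p \<Rightarrow> 't) \<Rightarrow> 't \<Rightarrow> 'p set" where
  "aof P f i = {p\<in>P. f p = i}"

lemma ex_max_on:
  fixes h :: "'a \<Rightarrow> 'b::linorder"
  assumes "finite S" "S \<noteq> {}"
  shows "\<exists>x\<in>S. \<forall>y\<in>S. h y \<le> h x"
proof -
  have "Max (h ` S) \<in> h ` S" using assms by simp
  then obtain x where "x \<in> S" "h x = Max (h ` S)" by auto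
  then show ?thesis using assms by (metis Max_ge finite_imageI imageI)
qed

lemma ex_min_on:
  fixes h :: "'a \<Rightarrow> 'b::linorder"
  assumes "finite S" "S \<noteq> {}"
  shows "\<exists>x\<in>S. \<forall>y\<in>S. h x \<le> h y"
proof -
  have "Min (h ` S) \<in> h ` S" using assms by simp
  then obtain x where "x \<in> S" "h x = Min (h ` S)" by auto
  then show ?thesis using assms by (metis Min_le finite_imageI imageI)
qed

lemma prod_strict:
  fixes h h' :: "'a \<Rightarrow> real"
  assumes "finite S" "\<forall>k\<in>S. 0 < h k \<and> h k \<le> h' k" "k0 \<in> S" "h k0 < h' k0"
  shows "prod h S < prod h' S"
proof -
  have e1: "prod h S = h k0 * prod h (S - {k0})" using assms by (simp add: prod.remove)
  have e2: "prod h' S = h' k0 * prod h' (S - {k0})" using assms by (simp add: prod.remove)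
  have p: "0 < prod h (S - {k0})" using assms by (intro prod_pos) auto
  have m: "prod h (S - {k0}) \<le> prod h' (S - {k0})"
    using assms by (intro prod_mono) auto
  have "h k0 * prod h (S - {k0}) < h' k0 * prod h (S - {k0})"
    using p assms by simp
  also have "\<dots> \<le> h' k0 * prod h' (S - {k0})"
    using m assms by (intro mult_left_mono) (auto simp: less_le_trans[of 0 "h k0"])
  finally show ?thesis using e1 e2 by simp
qed

lemma prod_two:
  assumes "finite S" "i \<in> S" "j \<in> S" "i \<noteq> j"
  shows "prod h S = h i * h j * prod h (S - {i, j})"
proof -
  have "prod h S = h i * prod h (S - {i})" using assms by (simp add: prod.remove)
  also have "prod h (S - {i}) = h j * prod h (S - {i} - {j})"
    using assms by (intro prod.remove) auto
  also have "S - {i} - {j} = S - {i, j}" by auto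
  finally show ?thesis by (simp add: mult.assoc)
qed

lemma aof_alloc:
  assumes "f \<in> PiE P (\<lambda>_. T)"
  shows "allocation T P (aof P f)"
  using assms unfolding allocation_def aof_def by (auto simp: PiE_iff)

lemma aof_team:
  assumes "f \<in> PiE P (\<lambda>_. T)" "p \<in> P"
  shows "team_of T (aof P f) p = f p"
  unfolding team_of_def
  using assms by (intro the_equality) (auto simp: aof_def PiE_iff)

lemma alloc_team:
  assumes "allocation T P A" "p \<in> P"
  shows "team_of T A p \<in> T \<and> p \<in> A (team_of T A p)"
proof -
  have ex: "\<exists>!i. i \<in> T \<and> p \<in> A i"
    using assms unfolding allocation_def by blast
  show ?thesis unfolding team_of_def using theI'[OF ex] by blast
qed

lemma alloc_conv:
  assumes "allocation T P A"
  shows "\<exists>f\<in>PiE P (\<lambda>_. T). (\<forall>i\<in>T. aof P f i = A i) \<and> (\<forall>p\<in>P. team_of T A p = f p)"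
proof -
  define f where "f = restrict (team_of T A) P"
  have fC: "f \<in> PiE P (\<lambda>_. T)" using alloc_team[OF assms] unfolding f_def by auto
  have "aof P f i = A i" if iT: "i \<in> T" for i
  proof
    show "aof P f i \<subseteq> A i" using alloc_team[OF assms] unfolding aof_def f_def by auto
    show "A i \<subseteq> aof P f i"
    proof
      fix p assume pA: "p \<in> A i"
      have pP: "p \<in> P" using pA iT assms unfolding allocation_def by blast
      have t: "team_of T A p \<in> T \<and> p \<in> A (team_of T A p)" using alloc_team[OF assms pP] .
      have "team_of T A p = i"
        using assms t pA iT unfolding allocation_def by blast
      then show "p \<in> aof P f i" using pP unfolding aof_def f_def by auto
    qed
  qed
  moreover have "\<forall>p\<in>P. team_of T A p = f p" unfolding f_def by auto
  ultimately show ?thesis using fC by blast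
qed

lemma aof_move_i:
  assumes "g \<in> P" "f g = j" "i \<noteq> j"
  shows "aof P (f(g := i)) i = insert g (aof P f i)" and "g \<notin> aof P f i"
  using assms unfolding aof_def by auto

lemma aof_move_j:
  assumes "g \<in> P" "f g = j" "i \<noteq> j"
  shows "aof P (f(g := i)) j = aof P f j - {g}"
  using assms unfolding aof_def by auto

lemma aof_move_k:
  assumes "g \<in> P" "f g = j" "k \<noteq> i" "k \<noteq> j"
  shows "aof P (f(g := i)) k = aof P f k"
  using assms unfolding aof_def by auto


theorem theorem5:
  fixes T :: "'t set" and P :: "'p set"
    and pref :: "'p \<Rightarrow> 't \<Rightarrow> 't \<Rightarrow> bool"
    and v :: "'t \<Rightarrow> 'p \<Rightarrow> real"
  assumes "finite T" and "T \<noteq> {}" and "finite P"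
    and "\<And>p. p \<in> P \<Longrightarrow> weak_pref T (pref p)"
    and "\<And>i p. i \<in> T \<Longrightarrow> p \<in> P \<Longrightarrow> v i p \<ge> 0"
  shows "\<exists>A. allocation T P A \<and> EF1 T v A \<and> pareto_optimal T P pref v A"
proof -
  note finT = assms(1) and finP = assms(3) and wp = assms(4) and vnn = assms(5)
  define C where "C = PiE P (\<lambda>_. T)"
  have finC: "finite C" unfolding C_def using finT finP by (intro finite_PiE) auto
  have neC: "C \<noteq> {}" unfolding C_def using assms(2) by (simp add: PiE_eq_empty_iff)
  define w where "w f k = val v k (aof P f k)" for f k
  define pos where "pos f = {k\<in>T. w f k > 0}" for f
  define k1 where "k1 f = card (pos f)" for f
  define k2 where "k2 f = (\<Prod>k\<in>pos f. w f k)" for f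
  define rk where "rk p t = card {s\<in>T. pref p t s}" for p t
  define k3 where "k3 f = (\<Sum>p\<in>P. rk p (f p))" for f
  define C1 where "C1 = {f\<in>C. \<forall>g\<in>C. k1 g \<le> k1 f}"
  define C2 where "C2 = {f\<in>C1. \<forall>g\<in>C1. k2 g \<le> k2 f}"
  define C3 where "C3 = {f\<in>C2. \<forall>g\<in>C2. k3 g \<le> k3 f}"
  have "C1 \<noteq> {}" unfolding C1_def using ex_max_on[OF finC neC, of k1] by blast
  have finC1: "finite C1" unfolding C1_def using finC by simp
  have "C2 \<noteq> {}" unfolding C2_def using ex_max_on[OF finC1 \<open>C1 \<noteq> {}\<close>, of k2] by blast
  have finC2: "finite C2" unfolding C2_def using finC1 by simp
  obtain f where fC3: "f \<in> C3" unfolding C3_def using ex_max_on[OF finC2 \<open>C2 \<noteq> {}\<close>, of k3] by blast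
  have fC2: "f \<in> C2" and fC1: "f \<in> C1" and fC: "f \<in> C" using fC3 unfolding C3_def C2_def C1_def by auto
  have aofP: "aof P g k \<subseteq> P" for g :: "'p \<Rightarrow> 't" and k unfolding aof_def by auto
  have finaof: "finite (aof P g k)" for g :: "'p \<Rightarrow> 't" and k using finite_subset[OF aofP finP] .
  have wnn: "0 \<le> w g k" if "k \<in> T" for g k
    unfolding w_def val_def using that aofP vnn by (intro sum_nonneg) blast
  have finpos: "finite (pos g)" for g unfolding pos_def using finT by simp
  have L1: False if "f' \<in> C" "pos f \<subseteq> pos f'" "i \<in> pos f'" "i \<notin> pos f" for f' i
  proof -
    have "pos f < pos f'" using that by auto
    then have "k1 f < k1 f'" unfolding k1_def by (intro psubset_card_mono finpos)
    then show False using fC1 that(1) unfolding C1_def by force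
  qed
  have L2: False if "f' \<in> C" "pos f' = pos f" "k2 f < k2 f'" for f'
  proof -
    have "f' \<in> C1" using fC1 that unfolding C1_def k1_def by auto
    then show False using fC2 that unfolding C2_def by force
  qed
  have allocA: "allocation T P (aof P f)" using aof_alloc fC unfolding C_def by blast
  have mvC: "f(g := i) \<in> C" if "g \<in> P" "i \<in> T" for g i
    using fC that unfolding C_def by (auto simp: PiE_iff extensional_def)
  have mv_i: "w (f(g := i)) i = w f i + v i g" if "g \<in> aof P f j" "i \<noteq> j" for g i j
  proof -
    have g: "g \<in> P" "f g = j" using that unfolding aof_def by auto
    show ?thesis unfolding w_def val_def aof_move_i(1)[where f=f and g=g and i=i and j=j and P=P, OF g that(2)]
      using aof_move_i(2)[where f=f and g=g and i=i and j=j and P=P, OF g that(2)] finaof by (simp add: sum.insert)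
  qed
  have mv_j: "w (f(g := i)) j = w f j - v j g" if "g \<in> aof P f j" "i \<noteq> j" for g i j
  proof -
    have g: "g \<in> P" "f g = j" using that unfolding aof_def by auto
    show ?thesis unfolding w_def val_def aof_move_j[where f=f and g=g and i=i and j=j and P=P, OF g that(2)]
      using that(1) finaof by (simp add: sum_diff1)
  qed
  have mv_k: "w (f(g := i)) k = w f k" if "g \<in> aof P f j" "k \<noteq> i" "k \<noteq> j" for g i j k
  proof -
    have g: "g \<in> P" "f g = j" using that unfolding aof_def by auto
    show ?thesis unfolding w_def aof_move_k[where f=f and g=g and i=i and j=j and P=P, OF g that(2,3)] ..
  qed
  have EF: "EF1 T v (aof P f)"
    unfolding EF1_def
  proof (intro ballI impI)
    fix i j assume iT: "i \<in> T" and jT: "j \<in> T" and ij: "i \<noteq> j"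
    show "\<exists>X Y. X \<subseteq> aof P f i \<and> Y \<subseteq> aof P f j \<and> card (X \<union> Y) \<le> 1 \<and>
            val v i (aof P f i - X) \<ge> val v i (aof P f j - Y)"
    proof (rule ccontr)
      assume H: "\<not> (\<exists>X Y. X \<subseteq> aof P f i \<and> Y \<subseteq> aof P f j \<and> card (X \<union> Y) \<le> 1 \<and>
            val v i (aof P f i - X) \<ge> val v i (aof P f j - Y))"
      define Aj where "Aj = aof P f j"
      define a where "a = w f i"
      define b where "b = w f j"
      define V where "V = val v i Aj"
      have finAj: "finite Aj" unfolding Aj_def by (rule finaof)
      have AjP: "g \<in> P \<and> f g = j" if "g \<in> Aj" for g using that unfolding Aj_def aof_def by auto
      have vAj: "0 \<le> v k g" if "k \<in> T" "g \<in> Aj" for k g using vnn AjP that by blast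
      have aV: "a < V"
      proof (rule ccontr)
        assume "\<not> a < V"
        then have "\<exists>X Y. X \<subseteq> aof P f i \<and> Y \<subseteq> aof P f j \<and> card (X \<union> Y) \<le> 1 \<and>
            val v i (aof P f i - X) \<ge> val v i (aof P f j - Y)"
          by (intro exI[of _ "{}"]) (simp add: a_def V_def w_def Aj_def)
        then show False using H by blast
      qed
      have gap: "a < V - v i g" if gA: "g \<in> Aj" for g
      proof (rule ccontr)
        assume "\<not> a < V - v i g"
        moreover have "val v i (Aj - {g}) = V - v i g"
          unfolding V_def val_def using finAj gA by (simp add: sum_diff1)
        ultimately have "\<exists>X Y. X \<subseteq> aof P f i \<and> Y \<subseteq> aof P f j \<and> card (X \<union> Y) \<le> 1 \<and>
            val v i (aof P f i - X) \<ge> val v i (aof P f j - Y)"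
          using gA by (intro exI[of _ "{}"] exI[of _ "{g}"]) (simp add: a_def w_def Aj_def)
        then show False using H by blast
      qed
      have a0: "0 \<le> a" unfolding a_def using wnn[OF iT] .
      have b0: "0 \<le> b" unfolding b_def using wnn[OF jT] .
      define G where "G = {g\<in>Aj. v i g > 0}"
      have GAj: "G \<subseteq> Aj" unfolding G_def by auto
      have finG: "finite G" using finite_subset[OF GAj finAj] .
      have VG: "V = sum (v i) G" unfolding V_def val_def
      proof (rule sum.mono_neutral_cong_right[OF finAj GAj])
        show "\<forall>x\<in>Aj - G. v i x = 0" using vAj[OF iT] unfolding G_def by force
      qed simp
      have Gne: "G \<noteq> {}" using VG aV a0 by auto
      have bsum: "sum (v j) S \<le> b" if "S \<subseteq> Aj" for S
        unfolding b_def w_def val_def Aj_def[symmetric]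
        using that finAj vAj[OF jT] by (intro sum_mono2) auto
      have wi: "w (f(g := i)) i = a + v i g" if "g \<in> Aj" for g
        using mv_i[of g j i] that ij unfolding Aj_def a_def by simp
      have wj: "w (f(g := i)) j = b - v j g" if "g \<in> Aj" for g
        using mv_j[of g j i] that ij unfolding Aj_def b_def by simp
      have wk: "w (f(g := i)) k = w f k" if "g \<in> Aj" "k \<noteq> i" "k \<noteq> j" for g k
        using mv_k[of g j k i] that unfolding Aj_def by simp
      have fC': "f(g := i) \<in> C" if "g \<in> Aj" for g using mvC AjP[OF that] iT by blast
      show False
      proof (cases "a = 0")
        case True
        obtain g where gG: "g \<in> G" and gb: "b = 0 \<or> v j g < b"
        proof -
          obtain g1 where g1: "g1 \<in> G" using Gne by blast
          show ?thesis
          proof (cases "b = 0 \<or> v j g1 < b")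
            case True then show ?thesis using that g1 by blast
          next
            case False
            have "0 < V - v i g1" using gap[of g1] g1 GAj True by auto
            also have "V - v i g1 = sum (v i) (Aj - {g1})"
              unfolding V_def val_def using finAj g1 GAj by (auto simp: sum_diff1)
            finally have pos1: "0 < sum (v i) (Aj - {g1})" .
            obtain g2 where g2: "g2 \<in> Aj - {g1}" "v i g2 > 0"
            proof (rule ccontr)
              assume "\<not> thesis"
              then have "\<forall>g\<in>Aj - {g1}. v i g \<le> 0" using that by force
              then have "sum (v i) (Aj - {g1}) \<le> 0" by (intro sum_nonpos) auto
              then show False using pos1 by simp
            qed
            have g2G: "g2 \<in> G" using g2 unfolding G_def by auto
            have "sum (v j) {g1, g2} \<le> b" using g1 g2 GAj by (intro bsum) auto
            moreover have "g1 \<noteq> g2" using g2 by auto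
            ultimately have "v j g1 + v j g2 \<le> b" by simp
            then have "v j g2 < b" using False b0 by auto
            then show ?thesis using that g2G by blast
          qed
        qed
        have gA: "g \<in> Aj" using gG GAj by blast
        have vig: "v i g > 0" using gG unfolding G_def by auto
        have sub: "pos f \<subseteq> pos (f(g := i))"
        proof
          fix k assume kp: "k \<in> pos f"
          then have kT: "k \<in> T" and kw: "w f k > 0" unfolding pos_def by auto
          have "k \<noteq> i" using kw True unfolding a_def by auto
          show "k \<in> pos (f(g := i))"
          proof (cases "k = j")
            case True
            then have "b > 0" using kw unfolding b_def by simp
            then have "w (f(g := i)) j > 0" using gb wj[OF gA] by auto
            then show ?thesis using kT True unfolding pos_def by simp
          next
            case False
            then show ?thesis using kp wk[OF gA \<open>k \<noteq> i\<close> False] unfolding pos_def by simp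
          qed
        qed
        have "i \<in> pos (f(g := i))" using iT wi[OF gA] True vig unfolding pos_def by simp
        moreover have "i \<notin> pos f" using True unfolding pos_def a_def by simp
        ultimately show False using L1[OF fC'[OF gA] sub] by blast
      next
        case False
        then have apos: "a > 0" using a0 by simp
        show False
        proof (cases "b = 0")
          case True
          obtain g where gG: "g \<in> G" using Gne by blast
          have gA: "g \<in> Aj" using gG GAj by blast
          have vig: "v i g > 0" using gG unfolding G_def by auto
          have vjg: "v j g \<ge> 0" using vAj[OF jT gA] .
          have peq: "pos (f(g := i)) = pos f"
          proof (intro set_eqI iffI)
            fix k assume "k \<in> pos (f(g := i))"
            then have kT: "k \<in> T" and kw: "w (f(g := i)) k > 0" unfolding pos_def by auto
            show "k \<in> pos f"
            proof (cases "k = i")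
              case True then show ?thesis using kT apos unfolding pos_def a_def by simp
            next
              case False
              have "k \<noteq> j" using kw wj[OF gA] True vjg by auto
              then show ?thesis using kT kw wk[OF gA False] unfolding pos_def by simp
            qed
          next
            fix k assume "k \<in> pos f"
            then have kT: "k \<in> T" and kw: "w f k > 0" unfolding pos_def by auto
            show "k \<in> pos (f(g := i))"
            proof (cases "k = i")
              case True then show ?thesis using kT apos vig wi[OF gA] unfolding pos_def by simp
            next
              case False
              have "k \<noteq> j" using kw True unfolding b_def by auto
              then show ?thesis using kT kw wk[OF gA False] unfolding pos_def by simp
            qed
          qed
          have "k2 f < k2 (f(g := i))" unfolding k2_def peq
          proof (rule prod_strict[OF finpos])
            show "\<forall>k\<in>pos f. 0 < w f k \<and> w f k \<le> w (f(g := i)) k"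
            proof
              fix k assume kp: "k \<in> pos f"
              then have kw: "w f k > 0" unfolding pos_def by auto
              show "0 < w f k \<and> w f k \<le> w (f(g := i)) k"
              proof (cases "k = i")
                case True then show ?thesis using kw wi[OF gA] vig unfolding a_def by simp
              next
                case False
                have "k \<noteq> j" using kw \<open>b = 0\<close> unfolding b_def by auto
                then show ?thesis using kw wk[OF gA False] by simp
              qed
            qed
            show "i \<in> pos f" using iT apos unfolding pos_def a_def by simp
            show "w f i < w (f(g := i)) i" using wi[OF gA] vig unfolding a_def by simp
          qed
          then show False using L2[OF fC'[OF gA] peq] by blast
        next
          case False
          then have bpos: "b > 0" using b0 by simp
          obtain g where gG: "g \<in> G" and gmin: "\<forall>h\<in>G. v j g / v i g \<le> v j h / v i h"
            using ex_min_on[OF finG Gne, of "\<lambda>h. v j h / v i h"] by blast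
          have gA: "g \<in> Aj" using gG GAj by blast
          define x where "x = v i g"
          define y where "y = v j g"
          have xpos: "x > 0" using gG unfolding G_def x_def by auto
          have y0: "y \<ge> 0" unfolding y_def using vAj[OF jT gA] .
          have cross: "y * v i h \<le> v j h * x" if hG: "h \<in> G" for h
          proof -
            have vih: "v i h > 0" using hG unfolding G_def by auto
            have "y / x \<le> v j h / v i h" using gmin hG unfolding x_def y_def by blast
            then show ?thesis using vih xpos by (simp add: field_simps)
          qed
          have yV: "y * V \<le> b * x"
          proof -
            have "y * V = (\<Sum>h\<in>G. y * v i h)" unfolding VG by (simp add: sum_distrib_left)
            also have "\<dots> \<le> (\<Sum>h\<in>G. v j h * x)" using cross by (intro sum_mono) auto
            also have "\<dots> = sum (v j) G * x" by (simp add: sum_distrib_right)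
            also have "\<dots> \<le> b * x" using bsum[OF GAj] xpos by (intro mult_right_mono) auto
            finally show ?thesis .
          qed
          have Vgt: "a + x < V" using gap[OF gA] unfolding x_def by simp
          have lt: "y * (a + x) < b * x"
          proof (cases "y = 0")
            case True then show ?thesis using bpos xpos by simp
          next
            case False
            then have "y > 0" using y0 by simp
            then have "y * (a + x) < y * V" using Vgt by (intro mult_strict_left_mono) auto
            then show ?thesis using yV by simp
          qed
          have key: "a * b < (a + x) * (b - y)"
          proof -
            have "(a + x) * (b - y) = a * b + (b * x - y * (a + x))" by (simp add: algebra_simps)
            then show ?thesis using lt by simp
          qed
          have ax: "a + x > 0" using apos xpos by simp
          have by0: "b - y > 0"
          proof -
            have "0 < (a + x) * (b - y)" using key apos bpos
              by (meson less_trans mult_pos_pos)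
            then show ?thesis using ax by (simp add: zero_less_mult_iff)
          qed
          have wi': "w (f(g := i)) i = a + x" using wi[OF gA] unfolding x_def .
          have wj': "w (f(g := i)) j = b - y" using wj[OF gA] unfolding y_def .
          have peq: "pos (f(g := i)) = pos f"
          proof (intro set_eqI)
            fix k
            show "k \<in> pos (f(g := i)) \<longleftrightarrow> k \<in> pos f"
            proof (cases "k = i \<or> k = j")
              case True then show ?thesis
                using iT jT apos bpos ax by0 wi' wj' unfolding pos_def a_def b_def by auto
            next
              case False then show ?thesis using wk[OF gA] unfolding pos_def by auto
            qed
          qed
          have ip: "i \<in> pos f" and jp: "j \<in> pos f"
            using iT jT apos bpos unfolding pos_def a_def b_def by auto
          define R where "R = prod (w f) (pos f - {i, j})"
          have Rpos: "R > 0" unfolding R_def pos_def by (intro prod_pos) auto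
          have R': "prod (w (f(g := i))) (pos f - {i, j}) = R"
            unfolding R_def using wk[OF gA] by (intro prod.cong) auto
          have e1: "k2 f = a * b * R" unfolding k2_def R_def a_def b_def
            by (rule prod_two[OF finpos ip jp ij])
          have e2: "k2 (f(g := i)) = (a + x) * (b - y) * R" unfolding k2_def peq
            using prod_two[OF finpos ip jp ij, of "w (f(g := i))"] wi' wj' R' by simp
          have "k2 f < k2 (f(g := i))" unfolding e1 e2
            using key Rpos by (intro mult_strict_right_mono) auto
          then show False using L2[OF fC'[OF gA] peq] by blast
        qed
      qed
    qed
  qed
  have PO: "pareto_optimal T P pref v (aof P f)"
    unfolding pareto_optimal_def
  proof (intro conjI allocA notI)
    assume "\<exists>A'. allocation T P A' \<and> pareto_dominates T P pref v A' (aof P f)"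
    then obtain A' where aA': "allocation T P A'" and dom: "pareto_dominates T P pref v A' (aof P f)"
      by blast
    obtain f' where f'C: "f' \<in> PiE P (\<lambda>_. T)" and eqA: "\<forall>i\<in>T. aof P f' i = A' i"
      and eqt: "\<forall>p\<in>P. team_of T A' p = f' p" using alloc_conv[OF aA'] by blast
    have f'C': "f' \<in> C" using f'C unfolding C_def .
    have tf: "\<forall>p\<in>P. team_of T (aof P f) p = f p" by (intro ballI aof_team[OF fC[unfolded C_def]])
    have fT: "f p \<in> T" "f' p \<in> T" if "p \<in> P" for p
      using that fC f'C unfolding C_def by auto
    have D1: "\<forall>i\<in>T. val v i (A' i) \<ge> val v i (aof P f i)"
      and D2: "\<forall>p\<in>P. pref p (team_of T A' p) (team_of T (aof P f) p)"
      and D3: "(\<exists>i\<in>T. val v i (A' i) > val v i (aof P f i)) \<or>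
               (\<exists>p\<in>P. \<not> pref p (team_of T (aof P f) p) (team_of T A' p))"
      using dom[unfolded pareto_dominates_def] by simp_all
    have ge: "\<forall>i\<in>T. w f' i \<ge> w f i"
    proof
      fix i assume iT: "i \<in> T"
      then show "w f' i \<ge> w f i" using D1 eqA unfolding w_def by simp
    qed
    have prefs: "\<forall>p\<in>P. pref p (f' p) (f p)"
    proof
      fix p assume pP: "p \<in> P"
      then show "pref p (f' p) (f p)" using D2 eqt tf by simp
    qed
    have strict: "(\<exists>i\<in>T. w f' i > w f i) \<or> (\<exists>p\<in>P. \<not> pref p (f p) (f' p))"
    proof (rule disjE[OF D3])
      assume "\<exists>i\<in>T. val v i (A' i) > val v i (aof P f i)"
      then obtain i where "i \<in> T" "val v i (A' i) > val v i (aof P f i)" by blast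
      then have "i \<in> T \<and> w f' i > w f i" using eqA unfolding w_def by simp
      then show ?thesis by blast
    next
      assume "\<exists>p\<in>P. \<not> pref p (team_of T (aof P f) p) (team_of T A' p)"
      then obtain p where "p \<in> P" "\<not> pref p (team_of T (aof P f) p) (team_of T A' p)" by blast
      then have "p \<in> P \<and> \<not> pref p (f p) (f' p)" using eqt tf by simp
      then show ?thesis by blast
    qed
    have sub: "pos f \<subseteq> pos f'" using ge unfolding pos_def by force
    have peq: "pos f' = pos f"
    proof (rule ccontr)
      assume "pos f' \<noteq> pos f"
      then obtain i where "i \<in> pos f'" "i \<notin> pos f" using sub by blast
      then show False using L1[OF f'C' sub] by blast
    qed
    have k2le: "k2 f \<le> k2 f'" unfolding k2_def peq
      using ge wnn unfolding pos_def by (intro prod_mono) auto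
    have nk: "\<not> (\<exists>i\<in>T. w f' i > w f i)"
    proof
      assume "\<exists>i\<in>T. w f' i > w f i"
      then obtain i where iT: "i \<in> T" and lt: "w f' i > w f i" by blast
      have "i \<in> pos f'" using iT lt wnn[OF iT, of f] unfolding pos_def by auto
      then have ip: "i \<in> pos f" using peq by simp
      have "k2 f < k2 f'" unfolding k2_def peq
        using ge ip lt unfolding pos_def by (intro prod_strict[OF finpos[unfolded pos_def]]) auto
      then show False using L2[OF f'C' peq] by blast
    qed
    then obtain p where pP: "p \<in> P" and np: "\<not> pref p (f p) (f' p)" using strict by blast
    have f'C1: "f' \<in> C1" using fC1 f'C' peq unfolding C1_def k1_def by auto
    have "k2 f' \<le> k2 f" using fC2 f'C1 unfolding C2_def by auto
    then have f'C2: "f' \<in> C2" using fC2 f'C1 k2le unfolding C2_def by auto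
    have wrefl: "pref q t t" if "q \<in> P" "t \<in> T" for q t
      using wp[OF that(1)] that(2) unfolding weak_pref_def by blast
    have wtrans: "pref q r t" if "q \<in> P" "r \<in> T" "s \<in> T" "t \<in> T" "pref q r s" "pref q s t" for q r s t
    proof -
      have "\<forall>r\<in>T. \<forall>s\<in>T. \<forall>t\<in>T. pref q r s \<longrightarrow> pref q s t \<longrightarrow> pref q r t"
        using wp[OF that(1)] unfolding weak_pref_def by (rule conjunct2)
      then show ?thesis using that by blast
    qed
    have rk_mono: "rk q (f q) \<le> rk q (f' q)" if qP: "q \<in> P" for q
    proof -
      have "{s\<in>T. pref q (f q) s} \<subseteq> {s\<in>T. pref q (f' q) s}"
        using wtrans[OF qP fT(2)[OF qP] fT(1)[OF qP]] prefs qP by blast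
      then show ?thesis unfolding rk_def using finT by (intro card_mono) auto
    qed
    have rk_strict: "rk p (f p) < rk p (f' p)"
    proof -
      have refl: "pref p (f' p) (f' p)" using wrefl[OF pP] fT[OF pP] by blast
      have "{s\<in>T. pref p (f p) s} \<subseteq> {s\<in>T. pref p (f' p) s}"
        using wtrans[OF pP fT(2)[OF pP] fT(1)[OF pP]] prefs pP by blast
      moreover have "f' p \<in> {s\<in>T. pref p (f' p) s} - {s\<in>T. pref p (f p) s}"
        using refl np fT[OF pP] by auto
      ultimately have "{s\<in>T. pref p (f p) s} < {s\<in>T. pref p (f' p) s}" by blast
      then show ?thesis unfolding rk_def using finT by (intro psubset_card_mono) auto
    qed
    have "k3 f < k3 f'" unfolding k3_def
      using rk_mono rk_strict pP finP by (intro sum_strict_mono_ex1) auto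
    then show False using fC3 f'C2 unfolding C3_def by force
  qed
  show ?thesis using allocA EF PO by blast
qed

end
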